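(* Let $a\in(0,1)$, $k\in(1,\infty)$ and $r,s\in(1,\infty)$. Then (1) $\pi_{rs}\le\sqrt{\pi_{r^2}\pi_{s^2}}\le\sqrt{\pi_r\pi_s}$; (2) $\pi_{r^as^{1-a}}\le a\,\pi_r+(1-a)\,\pi_s$; (3) if moreover $r\le s$, then $\left(\frac{\pi_s}{\pi_r}\right)^k\le\frac{\pi_{s^k}}{\pi_{r^k}}$.
   Context: For $p>1$, $\pi_p=\frac{2\pi}{p\sin(\pi/p)}$. *)

theory Defs
  imports Complex_Main
begin

definition gen_pi :: "real \<Rightarrow> real" where
  "gen_pi p = 2 * pi / (p * sin (pi / p))"

end

theory Submission imports Defs "HOL-Analysis.Convex" begin


definition hh :: "real \<Rightarrow> real" where
 "hh x = ln (2*pi) - x - ln (sin (pi * exp (-x)))"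
definition hp :: "real \<Rightarrow> real" where
 "hp x = -1 + pi * exp (-x) * cos (pi * exp (-x)) / sin (pi * exp (-x))"
definition hpp :: "real \<Rightarrow> real" where
 "hpp x = pi * exp (-x) * (pi * exp (-x) - sin (pi * exp (-x)) * cos (pi * exp (-x))) / (sin (pi * exp (-x)))^2"

lemma U_bounds: assumes "0 < x" shows "0 < pi * exp (-x)" "pi * exp (-x) < pi"
proof -
  show "0 < pi * exp (-x)" by simp
  have "exp (-x) < 1" using assms by simp
  then show "pi * exp (-x) < pi" by simp
qed

lemma sinU_pos: "0 < x \<Longrightarrow> 0 < sin (pi * exp (-x))"
  using U_bounds sin_gt_zero by blast

lemma U_deriv: "((\<lambda>x. pi * exp (-x)) has_real_derivative (-(pi * exp (-x)))) (at x)"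
proof -
  have "((\<lambda>x. exp (-x)) has_real_derivative (exp (-x) * (-1))) (at x)"
    by (rule DERIV_chain2[OF DERIV_exp]) (auto intro!: derivative_eq_intros)
  from DERIV_cmult[OF this, of pi] show ?thesis by simp
qed

lemma sinU_deriv: "((\<lambda>x. sin (pi * exp (-x))) has_real_derivative (cos (pi * exp (-x)) * (-(pi * exp (-x))))) (at x)"
  by (rule DERIV_chain2[OF DERIV_sin U_deriv])

lemma cosU_deriv: "((\<lambda>x. cos (pi * exp (-x))) has_real_derivative (- sin (pi * exp (-x)) * (-(pi * exp (-x))))) (at x)"
  by (rule DERIV_chain2[OF DERIV_cos U_deriv])

lemma hh_deriv: assumes "0 < x" shows "(hh has_real_derivative hp x) (at x)"
proof -
  have s: "sin (pi * exp (-x)) > 0" using sinU_pos assms by blast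
  note l = DERIV_chain2[OF DERIV_ln[OF s] sinU_deriv]
  note q = DERIV_diff[OF DERIV_diff[OF DERIV_const[of "ln (2*pi)"] DERIV_ident] l]
  show ?thesis unfolding hh_def[abs_def]
    apply (rule DERIV_cong[OF q])
    unfolding hp_def using s by (simp add: field_simps)
qed

lemma alg_aux: fixes u :: real assumes su: "sin u \<noteq> 0"
  shows "0 + ((- u * cos u + - sin u * - u * u) * sin u - u * cos u * (cos u * - u)) / (sin u * sin u)
     = u * (u - sin u * cos u) / (sin u)^2"
proof -
    have "u*(u*(cos u*cos u)) + u*(u*(sin u*sin u)) = u*u*(sin u * sin u + cos u * cos u)"
      by algebra
    also have "\<dots> = u*u" using sin_cos_squared_add[of u] by (simp add: power2_eq_square)
    finally have k: "u*(u*(cos u*cos u)) + u*(u*(sin u*sin u)) = u*u" .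
    show ?thesis using su
      by (simp add: field_simps power2_eq_square k)
qed

lemma hp_deriv: assumes "0 < x" shows "(hp has_real_derivative hpp x) (at x)"
proof -
  have s: "sin (pi * exp (-x)) \<noteq> 0" using sinU_pos assms by force
  note q = DERIV_add[OF DERIV_const[of "-1"] DERIV_divide[OF DERIV_mult[OF U_deriv cosU_deriv] sinU_deriv s]]
  show ?thesis unfolding hp_def[abs_def]
    apply (rule DERIV_cong[OF q])
    unfolding hpp_def by (rule alg_aux[OF s])
qed

lemma hpp_nonneg: assumes "0 < x" shows "hpp x \<ge> 0"
proof -
  define u where "u = pi * exp (-x)"
  have u: "0 < u" unfolding u_def by simp
  have "sin (2*u) \<le> 2*u" using sin_x_le_x[of "2*u"] u by simp
  hence "sin u * cos u \<le> u" by (simp add: sin_double)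
  thus ?thesis unfolding hpp_def u_def[symmetric] using u by simp
qed


lemma hh_convex: "convex_on {0<..} hh"
  by (rule f''_ge0_imp_convex[where f'=hp and f''=hpp]) (auto intro: hh_deriv hp_deriv hpp_nonneg)

lemma hp_mono: assumes "0 < x" "x \<le> y" shows "hp x \<le> hp y"
  by (rule DERIV_nonneg_imp_nondecreasing[OF assms(2)])
     (use assms hp_deriv hpp_nonneg in \<open>meson less_le_trans\<close>)

lemma sin_ge_ucos: assumes "0 \<le> u" "u \<le> pi" shows "u * cos u \<le> sin u"
proof -
  have "(\<lambda>t. sin t - t * cos t) 0 \<le> (\<lambda>t. sin t - t * cos t) u"
  proof (rule DERIV_nonneg_imp_nondecreasing[OF assms(1)])
    fix t assume t: "0 \<le> t" "t \<le> u"
    have "((\<lambda>t. sin t - t * cos t) has_real_derivative (t * sin t)) (at t)"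
      by (auto intro!: derivative_eq_intros)
    moreover have "t * sin t \<ge> 0"
      using t assms sin_ge_zero[of t] by simp
    ultimately show "\<exists>y. ((\<lambda>t. sin t - t * cos t) has_real_derivative y) (at t) \<and> 0 \<le> y" by blast
  qed
  thus ?thesis by simp
qed

lemma hp_nonpos: assumes "0 < x" shows "hp x \<le> 0"
proof -
  define u where "u = pi * exp (-x)"
  have u: "0 < u" "u < pi" using U_bounds[OF assms] u_def by auto
  have su: "sin u > 0" using u sin_gt_zero by blast
  have "u * cos u \<le> sin u" using sin_ge_ucos u by simp
  hence "u * cos u / sin u \<le> 1" using su by simp
  thus ?thesis unfolding hp_def u_def[symmetric] by simp
qed

lemma hh_antimono: assumes "0 < x" "x \<le> y" shows "hh y \<le> hh x"
  by (rule DERIV_nonpos_imp_nonincreasing[OF assms(2)])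
     (use assms hh_deriv hp_nonpos in \<open>meson less_le_trans\<close>)

lemma gp_eq: assumes "0 < x" shows "gen_pi (exp x) = exp (hh x)"
proof -
  have s: "sin (pi * exp (-x)) > 0" using sinU_pos assms by blast
  have "exp (hh x) = 2 * pi / (exp x * sin (pi * exp (-x)))"
    unfolding hh_def using s by (simp add: exp_diff exp_ln)
  moreover have "pi / exp x = pi * exp (-x)" by (simp add: exp_minus field_simps)
  ultimately show ?thesis unfolding gen_pi_def by simp
qed

lemma gp_ln: assumes "1 < p" shows "gen_pi p = exp (hh (ln p))"
  using gp_eq[of "ln p"] assms by simp


lemma sqrt_exp: "sqrt (exp A * exp B) = exp ((A + B) / 2)"
proof -
  have "(exp ((A + B) / 2))^2 = exp A * exp B"
    by (simp add: power2_eq_square exp_add[symmetric])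
  thus ?thesis by (intro real_sqrt_unique) auto
qed

theorem lemma3p6:
  fixes a k r s :: real
  assumes "0 < a" "a < 1" "1 < k" "1 < r" "1 < s"
  shows "gen_pi (r * s) \<le> sqrt (gen_pi (r\<^sup>2) * gen_pi (s\<^sup>2))
       \<and> sqrt (gen_pi (r\<^sup>2) * gen_pi (s\<^sup>2)) \<le> sqrt (gen_pi r * gen_pi s)
       \<and> gen_pi (r powr a * s powr (1 - a)) \<le> a * gen_pi r + (1 - a) * gen_pi s
       \<and> (r \<le> s \<longrightarrow> (gen_pi s / gen_pi r) powr k \<le> gen_pi (s powr k) / gen_pi (r powr k))"
proof -
  define X where "X = ln r"
  define Y where "Y = ln s"
  have X: "0 < X" and Y: "0 < Y" using assms by (auto simp: X_def Y_def)
  have r: "r = exp X" and s: "s = exp Y" using assms by (auto simp: X_def Y_def)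
  have G: "\<And>x. 0 < x \<Longrightarrow> gen_pi (exp x) = exp (hh x)" by (rule gp_eq)
  note cv = convex_onD[OF hh_convex]
  have p1: "gen_pi (r * s) \<le> sqrt (gen_pi (r\<^sup>2) * gen_pi (s\<^sup>2))"
  proof -
    have e1: "r * s = exp (X + Y)" "r^2 = exp (2*X)" "s^2 = exp (2*Y)"
      by (simp_all add: r s exp_add[symmetric] power2_eq_square)
    have "hh ((1 - 1/2) *\<^sub>R (2*X) + (1/2) *\<^sub>R (2*Y)) \<le> (1 - 1/2) * hh (2*X) + (1/2) * hh (2*Y)"
      by (rule cv) (use X Y in auto)
    hence "hh (X + Y) \<le> (hh (2*X) + hh (2*Y)) / 2" by simp
    thus ?thesis unfolding e1 using X Y by (simp add: G sqrt_exp)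
  qed
  have p2: "sqrt (gen_pi (r\<^sup>2) * gen_pi (s\<^sup>2)) \<le> sqrt (gen_pi r * gen_pi s)"
  proof -
    have e1: "r^2 = exp (2*X)" "s^2 = exp (2*Y)"
      by (simp_all add: r s exp_add[symmetric] power2_eq_square)
    have "exp (hh (2*X)) \<le> exp (hh X)" "exp (hh (2*Y)) \<le> exp (hh Y)"
      using hh_antimono[of X "2*X"] hh_antimono[of Y "2*Y"] X Y by auto
    hence "exp (hh (2*X)) * exp (hh (2*Y)) \<le> exp (hh X) * exp (hh Y)"
      by (intro mult_mono) auto
    thus ?thesis unfolding e1 using X Y by (simp add: G r s)
  qed
  have p3: "gen_pi (r powr a * s powr (1 - a)) \<le> a * gen_pi r + (1 - a) * gen_pi s"
  proof -
    have e: "r powr a * s powr (1 - a) = exp (a * X + (1 - a) * Y)"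
      using assms by (simp add: powr_def X_def Y_def exp_add[symmetric])
    have pos: "0 < a * X + (1 - a) * Y" using X Y assms by (smt (verit) mult_pos_pos)
    have "hh ((1 - (1 - a)) *\<^sub>R X + (1 - a) *\<^sub>R Y) \<le> (1 - (1 - a)) * hh X + (1 - a) * hh Y"
      by (rule cv) (use X Y assms in auto)
    hence h1: "hh (a * X + (1 - a) * Y) \<le> a * hh X + (1 - a) * hh Y" by simp
    have "exp ((1 - (1 - a)) *\<^sub>R hh X + (1 - a) *\<^sub>R hh Y) \<le> (1 - (1 - a)) * exp (hh X) + (1 - a) * exp (hh Y)"
      by (rule convex_onD[OF exp_convex]) (use assms in auto)
    hence h2: "exp (a * hh X + (1 - a) * hh Y) \<le> a * exp (hh X) + (1 - a) * exp (hh Y)" by simp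
    have "gen_pi (r powr a * s powr (1 - a)) = exp (hh (a * X + (1 - a) * Y))"
      unfolding e using pos by (simp add: G)
    also have "\<dots> \<le> exp (a * hh X + (1 - a) * hh Y)" using h1 by simp
    also have "\<dots> \<le> a * exp (hh X) + (1 - a) * exp (hh Y)" by (rule h2)
    finally show ?thesis using X Y by (simp add: G r s)
  qed
  have p4: "r \<le> s \<longrightarrow> (gen_pi s / gen_pi r) powr k \<le> gen_pi (s powr k) / gen_pi (r powr k)"
  proof
    assume rs: "r \<le> s"
    hence XY: "X \<le> Y" using assms by (simp add: X_def Y_def)
    have mono: "(\<lambda>t. hh (k * t) - k * hh t) X \<le> (\<lambda>t. hh (k * t) - k * hh t) Y"
    proof (rule DERIV_nonneg_imp_nondecreasing[OF XY])
      fix t assume t: "X \<le> t" "t \<le> Y"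
      have t0: "0 < t" using t X by simp
      have kt: "0 < k * t" using t0 assms by simp
      have c: "((\<lambda>t. k * t) has_real_derivative (k * 1)) (at t)" by (intro DERIV_cmult DERIV_ident)
      have d: "((\<lambda>t. hh (k * t) - k * hh t) has_real_derivative (hp (k * t) * (k * 1) - k * hp t)) (at t)"
        by (intro DERIV_diff DERIV_cmult DERIV_chain2[where g="\<lambda>t. k * t", OF hh_deriv[OF kt] c] hh_deriv[OF t0])
      have "hp t \<le> hp (k * t)" using hp_mono[OF t0] t0 assms by simp
      hence "hp (k * t) * (k * 1) - k * hp t \<ge> 0" using assms by (simp add: algebra_simps)
      thus "\<exists>y. ((\<lambda>t. hh (k * t) - k * hh t) has_real_derivative y) (at t) \<and> 0 \<le> y" using d by blast
    qed
    hence ineq: "k * (hh Y - hh X) \<le> hh (k * Y) - hh (k * X)" by (simp add: algebra_simps)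
    have kX: "0 < k * X" and kY: "0 < k * Y" using X Y assms by auto
    have "(gen_pi s / gen_pi r) powr k = exp (k * (hh Y - hh X))"
      using X Y by (simp add: G r s powr_def exp_diff[symmetric])
    also have "\<dots> \<le> exp (hh (k * Y) - hh (k * X))" using ineq by simp
    also have "\<dots> = gen_pi (s powr k) / gen_pi (r powr k)"
      using kX kY by (simp add: G r s powr_def exp_diff mult.commute)
    finally show "(gen_pi s / gen_pi r) powr k \<le> gen_pi (s powr k) / gen_pi (r powr k)" .
  qed
  show ?thesis using p1 p2 p3 p4 by blast
qed

end
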